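(* Consider the critical discount factor \[\delta^*(p,c,\beta)=\frac{p-2c}{p-\beta p^2+p^2}\] on the admissible region of parameters $p\in(0,1]$, constant cost $c\ge0$ (not depending on $p$), $\beta<1$, satisfying $c<\frac12p+\frac12(\beta-1)p^2$. Then: (i) $\delta^*$ is strictly decreasing in $c$; (ii) $\delta^*$ is strictly increasing in $\beta$; (iii) $\delta^*$ is not monotone in $p$: the partial derivative $\partial\delta^*/\partial p$ is positive at some admissible parameter points and negative at others.
   Context: $\delta^*$ is the threshold discount factor above which two symmetric players in an infinitely repeated Prisoners' Dilemma of ranking-manipulation attacks sustain cooperation under the grim trigger strategy; $p$ is the attack success probability, $c$ the per-period attack cost, $\beta$ the market degradation factor under mutual successful attacks. The inequality $c<\frac12p+\frac12(\beta-1)p^2$ is the standing assumption guaranteeing the Prisoners' Dilemma payoff ordering. *)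

theory Defs
  imports Complex_Main
begin

definition delta_star :: "real \<Rightarrow> real \<Rightarrow> real \<Rightarrow> real" where
  "delta_star p c \<beta> = (p - 2 * c) / (p - \<beta> * p^2 + p^2)"

definition admissible :: "real \<Rightarrow> real \<Rightarrow> real \<Rightarrow> bool" where
  "admissible p c \<beta> \<longleftrightarrow> 0 < p \<and> p \<le> 1 \<and> 0 \<le> c \<and> \<beta> < 1 \<and>
     c < p / 2 + (\<beta> - 1) * p^2 / 2"

end

theory Submission
  imports Defs
begin

lemma deriv_ds:
  assumes "p > 0" "\<beta> < 1"
  shows "((\<lambda>q. delta_star q c \<beta>) has_real_derivative
     ((p - \<beta> * p^2 + p^2) - (p - 2*c) * (1 - \<beta> * (2 * p) + 2*p)) / (p - \<beta> * p^2 + p^2)^2) (at p)"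
proof -
  have d: "p - \<beta> * p^2 + p^2 \<noteq> 0"
  proof -
    have "(1-\<beta>) * p^2 > 0" using assms by simp
    moreover have "(1-\<beta>) * p^2 = p^2 - \<beta> * p^2" by (simp add: algebra_simps)
    ultimately have "p - \<beta> * p^2 + p^2 > 0" using assms by linarith
    then show ?thesis by linarith
  qed
  have "((\<lambda>q. (q - 2 * c) / (q - \<beta> * q^2 + q^2)) has_real_derivative
     ((1 - 0) * (p - \<beta> * p^2 + p^2) - (p - 2*c) * (1 - \<beta> * (2 * p) + 2 * p)) / (p - \<beta> * p^2 + p^2)^2) (at p)"
    using d
    by (intro derivative_eq_intros DERIV_quotient DERIV_diff DERIV_add DERIV_ident DERIV_const DERIV_cmult DERIV_pow) (auto simp: power2_eq_square)
  then show ?thesis unfolding delta_star_def[abs_def] by simp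
qed

theorem theorem2:
  shows "(\<forall>p \<beta> c1 c2. admissible p c1 \<beta> \<and> admissible p c2 \<beta> \<and> c1 < c2
            \<longrightarrow> delta_star p c2 \<beta> < delta_star p c1 \<beta>)
     \<and> (\<forall>p c \<beta>1 \<beta>2. admissible p c \<beta>1 \<and> admissible p c \<beta>2 \<and> \<beta>1 < \<beta>2
            \<longrightarrow> delta_star p c \<beta>1 < delta_star p c \<beta>2)
     \<and> (\<exists>p c \<beta> D. admissible p c \<beta> \<and>
            ((\<lambda>q. delta_star q c \<beta>) has_real_derivative D) (at p) \<and> D > 0)
     \<and> (\<exists>p c \<beta> D. admissible p c \<beta> \<and>
            ((\<lambda>q. delta_star q c \<beta>) has_real_derivative D) (at p) \<and> D < 0)"
proof (intro conjI)
  show "\<forall>p \<beta> c1 c2. admissible p c1 \<beta> \<and> admissible p c2 \<beta> \<and> c1 < c2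
            \<longrightarrow> delta_star p c2 \<beta> < delta_star p c1 \<beta>"
  proof (intro allI impI)
    fix p \<beta> c1 c2 assume a: "admissible p c1 \<beta> \<and> admissible p c2 \<beta> \<and> c1 < c2"
    hence "0 < p" "\<beta> < 1" "c1 < c2" by (auto simp: admissible_def)
    moreover have "(1-\<beta>) * p^2 > 0" using calculation by simp
    moreover have "(1-\<beta>) * p^2 = p^2 - \<beta> * p^2" by (simp add: algebra_simps)
    ultimately have "p - \<beta> * p^2 + p^2 > 0" by linarith
    then show "delta_star p c2 \<beta> < delta_star p c1 \<beta>"
      unfolding delta_star_def using \<open>c1 < c2\<close> by (simp add: divide_strict_right_mono)
  qed
  show "\<forall>p c \<beta>1 \<beta>2. admissible p c \<beta>1 \<and> admissible p c \<beta>2 \<and> \<beta>1 < \<beta>2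
            \<longrightarrow> delta_star p c \<beta>1 < delta_star p c \<beta>2"
  proof (intro allI impI)
    fix p c \<beta>1 \<beta>2 assume a: "admissible p c \<beta>1 \<and> admissible p c \<beta>2 \<and> \<beta>1 < \<beta>2"
    hence h: "0 < p" "\<beta>2 < 1" "\<beta>1 < \<beta>2" "c < p / 2 + (\<beta>2 - 1) * p^2 / 2"
      by (auto simp: admissible_def)
    have "(1-\<beta>2) * p^2 > 0" using h by simp
    moreover have "(1-\<beta>2) * p^2 = p^2 - \<beta>2 * p^2" by (simp add: algebra_simps)
    ultimately have d2: "p - \<beta>2 * p^2 + p^2 > 0" using h by linarith
    have "(\<beta>2-\<beta>1) * p^2 > 0" using h by simp
    hence lt: "p - \<beta>2 * p^2 + p^2 < p - \<beta>1 * p^2 + p^2" by (simp add: algebra_simps)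
    have "(\<beta>2 - 1) * p^2 / 2 < 0" using h by (simp add: mult_neg_pos)
    hence n: "p - 2*c > 0" using h by linarith
    show "delta_star p c \<beta>1 < delta_star p c \<beta>2"
      unfolding delta_star_def using n d2 lt by (simp add: divide_strict_left_mono)
  qed
  show "\<exists>p c \<beta> D. admissible p c \<beta> \<and>
            ((\<lambda>q. delta_star q c \<beta>) has_real_derivative D) (at p) \<and> D > 0"
    apply (rule exI[of _ 1], rule exI[of _ "1/10"], rule exI[of _ "9/10"])
    apply (rule exI, rule conjI, simp add: admissible_def, rule conjI, rule deriv_ds)
      apply (simp_all add: power2_eq_square)
    done
  show "\<exists>p c \<beta> D. admissible p c \<beta> \<and>
            ((\<lambda>q. delta_star q c \<beta>) has_real_derivative D) (at p) \<and> D < 0"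
    apply (rule exI[of _ "1/2"], rule exI[of _ 0], rule exI[of _ 0])
    apply (rule exI, rule conjI, simp add: admissible_def power2_eq_square, rule conjI, rule deriv_ds)
      apply (simp_all add: power2_eq_square)
    done
qed

end
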